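(* Let $X_1,\ldots,X_d$ be $d$ disjoint sets and let $a_1,\ldots,a_d,b_1,\ldots,b_d$ be nonnegative integers. Suppose $A_1,\ldots,A_h$ and $B_1,\ldots,B_h$ are two families of subsets of $X_1\cup\cdots\cup X_d$ that satisfy: (1) $A_i\cap B_i=\emptyset$ for every $1\le i\le h$; (2) $A_i\cap B_j\neq\emptyset$ for every $1\le i<j\le h$; (3) for every $1\le i\le h$ and $1\le j\le d$ we have $|B_i\cap X_j|\le b_j$; (4) for every $1\le i\le h$ there is a permutation $\pi:[d]\to[d]$ such that for every $1\le j\le d$ we have $|A_i\cap X_j|\le a_{\pi(j)}$. Then $h\le Q(a_1,\ldots,a_d,b_1,\ldots,b_d)$, where $Q(a_1,\ldots,a_d,b_1,\ldots,b_d)$ is defined as follows: put $a:=\max_i a_i$, take disjoint sets $U_1,\ldots,U_d$ with $|U_i|=a+b_i$, identifying each $U_i$ with $[a+b_i]=\{1,\ldots,a+b_i\}$; then $Q(a_1,\ldots,a_d,b_1,\ldots,b_d)$ is the number of sets $S\subseteq U_1\cup\cdots\cup U_d$ for which there is a permutation $\pi:[d]\to[d]$ such that, for every $i$, $S\cap U_i$ is a subset of $[a_{\pi(i)}+b_i]$ of size $b_i$. Moreover, this bound is best possible for every choice of $a_1,\ldots,a_d$ and $b_1,\ldots,b_d$.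
   Context: $[n]$ denotes $\{1,\ldots,n\}$. This is a multi-partite variant of Bollobás's Two Families Theorem; it differs from Alon's multi-partite Two Families Theorem (which gives $h\le\prod_{j=1}^d\binom{a_j+b_j}{b_j}$) in that the permutation $\pi$ in condition (4) may depend on $i$ rather than being the identity. *)

theory Defs
  imports "HOL-Combinatorics.Permutations"
begin

definition multi_two_families ::
  "nat \<Rightarrow> (nat \<Rightarrow> nat) \<Rightarrow> (nat \<Rightarrow> nat) \<Rightarrow> (nat \<Rightarrow> 'a set) \<Rightarrow> nat
    \<Rightarrow> (nat \<Rightarrow> 'a set) \<Rightarrow> (nat \<Rightarrow> 'a set) \<Rightarrow> bool" where
  "multi_two_families d a b X h A B \<longleftrightarrow>
     (\<forall>j\<in>{1..d}. \<forall>k\<in>{1..d}. j \<noteq> k \<longrightarrow> X j \<inter> X k = {}) \<and>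
     (\<forall>i\<in>{1..h}. A i \<subseteq> (\<Union>j\<in>{1..d}. X j) \<and> B i \<subseteq> (\<Union>j\<in>{1..d}. X j)) \<and>
     (\<forall>i\<in>{1..h}. A i \<inter> B i = {}) \<and>
     (\<forall>i j. 1 \<le> i \<and> i < j \<and> j \<le> h \<longrightarrow> A i \<inter> B j \<noteq> {}) \<and>
     (\<forall>i\<in>{1..h}. \<forall>j\<in>{1..d}. finite (B i \<inter> X j) \<and> card (B i \<inter> X j) \<le> b j) \<and>
     (\<forall>i\<in>{1..h}. \<exists>\<pi>. \<pi> permutes {1..d} \<and>
        (\<forall>j\<in>{1..d}. finite (A i \<inter> X j) \<and> card (A i \<inter> X j) \<le> a (\<pi> j)))"

text \<open>The disjoint union U_1 \<union> ... \<union> U_d is modelled as the set of pairs (i,k)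
  with i \<in> {1..d}, k \<in> {1..amax+b i}; S \<inter> U_i corresponds to {k. (i,k) \<in> S}.\<close>

definition amax :: "nat \<Rightarrow> (nat \<Rightarrow> nat) \<Rightarrow> nat" where
  "amax d a = Max (a ` {1..d})"

definition Ucal :: "nat \<Rightarrow> (nat \<Rightarrow> nat) \<Rightarrow> (nat \<Rightarrow> nat) \<Rightarrow> (nat \<times> nat) set" where
  "Ucal d a b = {(i, k). i \<in> {1..d} \<and> k \<in> {1..amax d a + b i}}"

definition Qbound :: "nat \<Rightarrow> (nat \<Rightarrow> nat) \<Rightarrow> (nat \<Rightarrow> nat) \<Rightarrow> nat" where
  "Qbound d a b = card {S. S \<subseteq> Ucal d a b \<and>
     (\<exists>\<pi>. \<pi> permutes {1..d} \<and>
        (\<forall>i\<in>{1..d}. {k. (i, k) \<in> S} \<subseteq> {1..a (\<pi> i) + b i} \<and>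
                     card {k. (i, k) \<in> S} = b i))}"

end

theory Submission
  imports Defs "HOL-Library.Function_Algebras" "HOL-Computational_Algebra.Polynomial"
begin


definition fsc :: "real \<Rightarrow> ('x \<Rightarrow> real) \<Rightarrow> ('x \<Rightarrow> real)" where
  "fsc c f = (\<lambda>y. c * f y)"

interpretation FV: vector_space fsc
  by unfold_locales (auto simp: fsc_def fun_eq_iff algebra_simps)

lemma sum_fun_apply: "finite S \<Longrightarrow> (\<Sum>v\<in>S. g v) y = (\<Sum>v\<in>S. g v y)"
  by (induction S rule: finite_induct) auto

lemma triangular_bound:
  fixes F :: "nat \<Rightarrow> 'x \<Rightarrow> real" and P :: "nat \<Rightarrow> 'x"
  assumes diag: "\<And>i. i \<in> {1..h} \<Longrightarrow> F i (P i) \<noteq> 0"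
    and tri: "\<And>i k. 1 \<le> i \<Longrightarrow> i < k \<Longrightarrow> k \<le> h \<Longrightarrow> F i (P k) = 0"
    and sp: "\<And>i. i \<in> {1..h} \<Longrightarrow> F i \<in> FV.span M"
    and fin: "finite M"
  shows "h \<le> card M"
proof -
  have inj: "inj_on F {1..h}"
  proof (rule inj_onI)
    fix i k assume i: "i \<in> {1..h}" and k: "k \<in> {1..h}" and e: "F i = F k"
    show "i = k"
    proof (rule ccontr)
      assume "i \<noteq> k"
      then consider "i < k" | "k < i" by linarith
      then show False
      proof cases
        case 1 then show ?thesis using tri[of i k] diag[of k] i k e by auto
      next
        case 2 then show ?thesis using tri[of k i] diag[of i] i k e by auto
      qed
    qed
  qed
  have indep: "FV.independent (F ` {1..h})"
  proof
    assume "FV.dependent (F ` {1..h})"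
    then obtain u where u1: "\<exists>v \<in> F ` {1..h}. u v \<noteq> 0"
      and u2: "(\<Sum>v\<in>F ` {1..h}. fsc (u v) v) = 0"
      using FV.dependent_finite[of "F ` {1..h}"] by auto
    define I where "I = {i\<in>{1..h}. u (F i) \<noteq> 0}"
    have "I \<noteq> {}" using u1 unfolding I_def by auto
    moreover have "finite I" unfolding I_def by auto
    ultimately have i0I: "Max I \<in> I" and i0max: "\<And>i. i \<in> I \<Longrightarrow> i \<le> Max I" by auto
    define i0 where "i0 = Max I"
    have i0: "i0 \<in> {1..h}" "u (F i0) \<noteq> 0" using i0I unfolding i0_def I_def by auto
    have "0 = (\<Sum>v\<in>F ` {1..h}. fsc (u v) v) (P i0)" using u2 by simp
    also have "\<dots> = (\<Sum>v\<in>F ` {1..h}. u v * v (P i0))"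
      by (simp add: sum_fun_apply fsc_def)
    also have "\<dots> = (\<Sum>i\<in>{1..h}. u (F i) * F i (P i0))"
      using sum.reindex[OF inj, of "\<lambda>v. u v * v (P i0)"] by simp
    also have "\<dots> = u (F i0) * F i0 (P i0) + (\<Sum>i\<in>{1..h} - {i0}. u (F i) * F i (P i0))"
      using i0 by (simp add: sum.remove)
    also have "(\<Sum>i\<in>{1..h} - {i0}. u (F i) * F i (P i0)) = 0"
    proof (rule sum.neutral, rule ballI)
      fix i assume i: "i \<in> {1..h} - {i0}"
      show "u (F i) * F i (P i0) = 0"
      proof (cases "i < i0")
        case True then show ?thesis using tri[of i i0] i i0 by auto
      next
        case False
        then have "i > i0" using i by auto
        then have "i \<notin> I" using i0max i0_def by force
        then show ?thesis using i unfolding I_def by auto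
      qed
    qed
    finally show False using i0 diag[of i0] by simp
  qed
  have "F ` {1..h} \<subseteq> FV.span M" using sp by auto
  from FV.independent_span_bound[OF fin indep this]
  have "card (F ` {1..h}) \<le> card M" by simp
  then show ?thesis using card_image[OF inj] by simp
qed




definition pos :: "(nat \<Rightarrow> nat) \<Rightarrow> nat \<Rightarrow> nat \<Rightarrow> nat" where
  "pos w b m = (b + 1 - m) + (\<Sum>m'\<in>{m..b}. w m')"

definition phi :: "(nat \<Rightarrow> nat) \<Rightarrow> nat \<Rightarrow> nat set" where
  "phi w b = pos w b ` {1..b}"

lemma pos_step: "m \<in> {1..b} \<Longrightarrow> pos w b m = pos w b (Suc m) + 1 + w m"
  unfolding pos_def by (simp add: sum.atLeast_Suc_atMost, linarith)

lemma pos_last: "pos w b (Suc b) = 0"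
  unfolding pos_def by simp

lemma pos_strict: fixes w :: "nat \<Rightarrow> nat" and b m' m :: nat assumes "1 \<le> m'" "m' < m" "m \<le> Suc b" shows "pos w b m < pos w b m'"
proof -
  have "(\<Sum>x\<in>{m..b}. w x) \<le> (\<Sum>x\<in>{m'..b}. w x)"
    by (rule sum_mono2) (use assms in auto)
  then show ?thesis unfolding pos_def using assms by simp
qed

lemma pos_one: assumes "(\<Sum>m\<in>{0..b}. w m) = A" shows "pos w b 1 = b + (A - w 0)"
proof -
  have "(\<Sum>m\<in>{0..b}. w m) = w 0 + (\<Sum>m\<in>{1..b}. w m)"
    by (simp add: sum.atLeast_Suc_atMost)
  then show ?thesis unfolding pos_def using assms by simp
qed

lemma phi_card: "card (phi w b) = b"
proof -
  have "inj_on (pos w b) {1..b}"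
  proof (rule inj_onI)
    fix x y assume "x \<in> {1..b}" "y \<in> {1..b}" "pos w b x = pos w b y"
    then show "x = y" using pos_strict[where w=w and b=b and m'=x and m=y] pos_strict[where w=w and b=b and m'=y and m=x]
      by (cases x y rule: linorder_cases) auto
  qed
  then show ?thesis unfolding phi_def by (simp add: card_image)
qed

lemma phi_sub: assumes "(\<Sum>m\<in>{0..b}. w m) = A" "A \<le> c + w 0"
  shows "phi w b \<subseteq> {1..c + b}"
proof
  fix s assume "s \<in> phi w b"
  then obtain m where m: "m \<in> {1..b}" "s = pos w b m" unfolding phi_def by auto
  have "pos w b m \<le> pos w b 1" using pos_strict[where w=w and b=b and m'=1 and m=m] m by (cases "m = 1") auto
  moreover have "1 \<le> pos w b m" unfolding pos_def using m by (simp, linarith)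
  ultimately show "s \<in> {1..c+b}" using pos_one[OF assms(1)] assms(2) m by auto
qed

lemma count_inj:
  fixes S :: "nat set"
  assumes "finite S" "s \<in> S" "s' \<in> S" "card {x\<in>S. x > s} = card {x\<in>S. x > s'}"
  shows "s = s'"
proof (rule ccontr)
  assume ne: "s \<noteq> s'"
  have *: "card {x\<in>S. x > u'} < card {x\<in>S. x > u}" if "u < u'" "u' \<in> S" for u u'
    by (rule psubset_card_mono) (use that assms(1) in auto)
  show False using ne *[of s s'] *[of s' s] assms by (cases s s' rule: linorder_cases) auto
qed

lemma pos_count: assumes "m \<in> {1..b}"
  shows "card {x\<in>phi w b. x > pos w b m} = m - 1"
proof -
  have "{x\<in>phi w b. x > pos w b m} = pos w b ` {1..<m}"
  proof
    show "{x\<in>phi w b. x > pos w b m} \<subseteq> pos w b ` {1..<m}"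
    proof
      fix x assume x: "x \<in> {x\<in>phi w b. x > pos w b m}"
      then obtain m' where m': "m' \<in> {1..b}" "x = pos w b m'" unfolding phi_def by auto
      have "m' < m"
      proof (rule ccontr)
        assume "\<not> m' < m"
        then have "pos w b m' \<le> pos w b m" using pos_strict[where w=w and b=b and m'=m and m=m'] assms m'
          by (cases "m' = m") auto
        then show False using x m' by auto
      qed
      then show "x \<in> pos w b ` {1..<m}" using m' by auto
    qed
  next
    show "pos w b ` {1..<m} \<subseteq> {x\<in>phi w b. x > pos w b m}"
      using assms pos_strict[where w=w and b=b and m=m] unfolding phi_def by auto
  qed
  moreover have "inj_on (pos w b) {1..<m}"
  proof (rule inj_onI)
    fix x y assume "x \<in> {1..<m}" "y \<in> {1..<m}" "pos w b x = pos w b y"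
    then show "x = y" using pos_strict[where w=w and b=b and m'=x and m=y] pos_strict[where w=w and b=b and m'=y and m=x] assms
      by (cases x y rule: linorder_cases) auto
  qed
  ultimately show ?thesis by (simp add: card_image)
qed

lemma phi_inj:
  assumes "(\<Sum>m\<in>{0..b}. w m) = A" "(\<Sum>m\<in>{0..b}. w' m) = A" "phi w b = phi w' b"
    and "m \<le> b"
  shows "w m = w' m"
proof -
  have eqpos: "pos w b m = pos w' b m" if "m \<in> {1..b}" for m
  proof -
    have "pos w b m \<in> phi w b" "pos w' b m \<in> phi w b"
      using that assms(3) unfolding phi_def by auto
    moreover have "card {x\<in>phi w b. x > pos w b m} = card {x\<in>phi w b. x > pos w' b m}"
      using pos_count[OF that, of w] pos_count[OF that, of w'] assms(3) by simp
    ultimately show ?thesis using count_inj[of "phi w b"] unfolding phi_def by blast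
  qed
  have eqpos2: "pos w b m = pos w' b m" if "m \<in> {1..Suc b}" for m
    using eqpos that pos_last[of w b] pos_last[of w' b]
    by (cases "m = Suc b") auto
  have pos_ok: "w m = w' m" if "m \<in> {1..b}" for m
    using pos_step[OF that, of w] pos_step[OF that, of w'] eqpos2[of m] eqpos2[of "Suc m"] that
    by auto
  show ?thesis
  proof (cases "m = 0")
    case False then show ?thesis using pos_ok assms(4) by auto
  next
    case True
    have "(\<Sum>m\<in>{1..b}. w m) = (\<Sum>m\<in>{1..b}. w' m)" using pos_ok by (rule sum.cong[OF refl])
    moreover have "(\<Sum>m\<in>{0..b}. w m) = w 0 + (\<Sum>m\<in>{1..b}. w m)"
      "(\<Sum>m\<in>{0..b}. w' m) = w' 0 + (\<Sum>m\<in>{1..b}. w' m)"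
      by (simp_all add: sum.atLeast_Suc_atMost)
    ultimately show ?thesis using assms True by simp
  qed
qed




definition Vs :: "nat \<Rightarrow> (nat \<Rightarrow> nat) \<Rightarrow> (nat \<times> nat) set" where
  "Vs d b = {(j,m). j \<in> {1..d} \<and> m \<in> {0..b j}}"

definition EXP :: "nat \<Rightarrow> (nat \<Rightarrow> nat) \<Rightarrow> (nat \<Rightarrow> nat) \<Rightarrow> (nat \<times> nat \<Rightarrow> nat) set" where
  "EXP d a b = {e. (\<forall>v. v \<notin> Vs d b \<longrightarrow> e v = 0) \<and>
     (\<exists>\<pi>. \<pi> permutes {1..d} \<and> (\<forall>j\<in>{1..d}. (\<Sum>m\<in>{0..b j}. e (j,m)) = amax d a \<and>
           amax d a \<le> a (\<pi> j) + e (j,0)))}"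

definition Phi :: "nat \<Rightarrow> (nat \<Rightarrow> nat) \<Rightarrow> (nat \<times> nat \<Rightarrow> nat) \<Rightarrow> (nat \<times> nat) set" where
  "Phi d b e = {(j,k). j \<in> {1..d} \<and> k \<in> phi (\<lambda>m. e (j,m)) (b j)}"

lemma QSET_finite: "finite {S. S \<subseteq> Ucal d a b \<and> P S}"
proof -
  have "Ucal d a b \<subseteq> {1..d} \<times> {1..amax d a + Max (b ` {1..d})}"
  proof
    fix x assume "x \<in> Ucal d a b"
    then obtain i k where "x = (i,k)" "i \<in> {1..d}" "k \<in> {1..amax d a + b i}" unfolding Ucal_def by auto
    moreover have "b i \<le> Max (b ` {1..d})" using \<open>i \<in> {1..d}\<close> by auto
    moreover have "k \<le> amax d a + b i" using \<open>k \<in> {1..amax d a + b i}\<close> by simp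
    ultimately have "k \<le> amax d a + Max (b ` {1..d})" by linarith
    with \<open>x = (i,k)\<close> \<open>i \<in> {1..d}\<close> \<open>k \<in> {1..amax d a + b i}\<close> show "x \<in> {1..d} \<times> {1..amax d a + Max (b ` {1..d})}" by auto
  qed
  then have "finite (Ucal d a b)" by (rule finite_subset) auto
  then show ?thesis by (rule rev_finite_subset[OF finite_Pow_iff[THEN iffD2]]) auto
qed

lemma EXP_bound: "finite (EXP d a b) \<and> card (EXP d a b) \<le> Qbound d a b"
proof -
  define QS where "QS = {S. S \<subseteq> Ucal d a b \<and>
     (\<exists>\<pi>. \<pi> permutes {1..d} \<and>
        (\<forall>i\<in>{1..d}. {k. (i, k) \<in> S} \<subseteq> {1..a (\<pi> i) + b i} \<and>
                     card {k. (i, k) \<in> S} = b i))}"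
  have finQS: "finite QS" unfolding QS_def by (rule QSET_finite)
  have sl: "{k. (i,k) \<in> Phi d b e} = phi (\<lambda>m. e (i,m)) (b i)" if "i \<in> {1..d}" for i e
    using that unfolding Phi_def by auto
  have inj: "inj_on (Phi d b) (EXP d a b)"
  proof (rule inj_onI)
    fix e e' assume e: "e \<in> EXP d a b" and e': "e' \<in> EXP d a b" and eq: "Phi d b e = Phi d b e'"
    show "e = e'"
    proof
      fix v :: "nat \<times> nat"
      obtain j m where v: "v = (j,m)" by (cases v)
      show "e v = e' v"
      proof (cases "v \<in> Vs d b")
        case False then show ?thesis using e e' v unfolding EXP_def by auto
      next
        case True
        then have jm: "j \<in> {1..d}" "m \<le> b j" using v unfolding Vs_def by auto
        have s1: "(\<Sum>m\<in>{0..b j}. e (j,m)) = amax d a" using e jm unfolding EXP_def by auto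
        have s2: "(\<Sum>m\<in>{0..b j}. e' (j,m)) = amax d a" using e' jm unfolding EXP_def by auto
        have "phi (\<lambda>m. e (j,m)) (b j) = phi (\<lambda>m. e' (j,m)) (b j)"
          using sl[OF jm(1), of e] sl[OF jm(1), of e'] eq by simp
        from phi_inj[OF s1 s2 this jm(2)] show ?thesis using v by simp
      qed
    qed
  qed
  have amax_ge: "a j \<le> amax d a" if "j \<in> {1..d}" for j
    unfolding amax_def using that by auto
  have img: "Phi d b ` EXP d a b \<subseteq> QS"
  proof
    fix S assume "S \<in> Phi d b ` EXP d a b"
    then obtain e where e: "e \<in> EXP d a b" and S: "S = Phi d b e" by auto
    from e obtain \<pi> where pi: "\<pi> permutes {1..d}" and
      ej: "\<And>j. j\<in>{1..d} \<Longrightarrow> (\<Sum>m\<in>{0..b j}. e (j,m)) = amax d a \<and> amax d a \<le> a (\<pi> j) + e (j,0)"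
      unfolding EXP_def by auto
    have "S \<subseteq> Ucal d a b"
    proof
      fix x assume x: "x \<in> S"
      then obtain j k where jk: "x = (j,k)" "j \<in> {1..d}" "k \<in> phi (\<lambda>m. e (j,m)) (b j)"
        unfolding S Phi_def by auto
      have "phi (\<lambda>m. e (j,m)) (b j) \<subseteq> {1..amax d a + b j}"
        by (rule phi_sub) (use ej[OF jk(2)] in auto)
      then show "x \<in> Ucal d a b" using jk unfolding Ucal_def by auto
    qed
    moreover have "\<forall>i\<in>{1..d}. {k. (i, k) \<in> S} \<subseteq> {1..a (\<pi> i) + b i} \<and> card {k. (i, k) \<in> S} = b i"
    proof
      fix i assume i: "i \<in> {1..d}"
      have "phi (\<lambda>m. e (i,m)) (b i) \<subseteq> {1..a (\<pi> i) + b i}"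
        by (rule phi_sub) (use ej[OF i] in auto)
      then show "{k. (i, k) \<in> S} \<subseteq> {1..a (\<pi> i) + b i} \<and> card {k. (i, k) \<in> S} = b i"
        using sl[OF i, of e] phi_card S by simp
    qed
    ultimately show "S \<in> QS" unfolding QS_def using pi by blast
  qed
  have "finite (EXP d a b)"
    using inj img finQS by (metis finite_imageD finite_subset)
  moreover have "card (EXP d a b) \<le> card QS" by (rule card_inj_on_le[OF inj img finQS])
  ultimately show ?thesis unfolding Qbound_def QS_def by simp
qed




definition mnm :: "(nat \<times> nat) set \<Rightarrow> (nat \<times> nat \<Rightarrow> nat) \<Rightarrow> (nat \<times> nat \<Rightarrow> real) \<Rightarrow> real" where
  "mnm V e y = (\<Prod>v\<in>V. y v ^ e v)"

definition exq :: "'q set \<Rightarrow> ('q \<Rightarrow> nat) \<Rightarrow> ('q \<Rightarrow> nat) \<Rightarrow> nat \<times> nat \<Rightarrow> nat" where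
  "exq Q beta g v = card {q\<in>Q. (beta q, g q) = v}"

lemma expand:
  fixes Q :: "'q set" and beta :: "'q \<Rightarrow> nat" and bb :: "nat \<Rightarrow> nat"
  assumes fQ: "finite Q" and fV: "finite V"
    and inV: "\<And>q m. q \<in> Q \<Longrightarrow> m \<le> bb (beta q) \<Longrightarrow> (beta q, m) \<in> V"
  shows "(\<lambda>y. \<Prod>q\<in>Q. \<Sum>m\<in>{0..bb (beta q)}. c q m * y (beta q, m))
     = (\<Sum>g\<in>PiE Q (\<lambda>q. {0..bb (beta q)}). fsc (\<Prod>q\<in>Q. c q (g q)) (mnm V (exq Q beta g)))"
proof
  fix y
  have "(\<Prod>q\<in>Q. \<Sum>m\<in>{0..bb (beta q)}. c q m * y (beta q, m))
      = (\<Sum>g\<in>PiE Q (\<lambda>q. {0..bb (beta q)}). \<Prod>q\<in>Q. c q (g q) * y (beta q, g q))"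
    by (rule prod_sum_PiE) (use fQ in auto)
  also have "\<dots> = (\<Sum>g\<in>PiE Q (\<lambda>q. {0..bb (beta q)}). (\<Prod>q\<in>Q. c q (g q)) * mnm V (exq Q beta g) y)"
  proof (rule sum.cong[OF refl])
    fix g assume g: "g \<in> PiE Q (\<lambda>q. {0..bb (beta q)})"
    have "(\<Prod>q\<in>Q. y (beta q, g q)) = (\<Prod>v\<in>V. \<Prod>q\<in>{q. q \<in> Q \<and> (beta q, g q) = v}. y (beta q, g q))"
      by (rule prod.group[symmetric]) (use fQ fV g inV in \<open>auto simp: PiE_def Pi_def\<close>)
    also have "\<dots> = mnm V (exq Q beta g) y"
      unfolding mnm_def exq_def by (rule prod.cong[OF refl]) simp
    finally show "(\<Prod>q\<in>Q. c q (g q) * y (beta q, g q)) = (\<Prod>q\<in>Q. c q (g q)) * mnm V (exq Q beta g) y"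
      by (simp add: prod.distrib)
  qed
  also have "\<dots> = (\<Sum>g\<in>PiE Q (\<lambda>q. {0..bb (beta q)}). fsc (\<Prod>q\<in>Q. c q (g q)) (mnm V (exq Q beta g))) y"
    by (simp add: sum_fun_apply fQ finite_PiE fsc_def)
  finally show "(\<Prod>q\<in>Q. \<Sum>m\<in>{0..bb (beta q)}. c q m * y (beta q, m)) = (\<Sum>g\<in>PiE Q (\<lambda>q. {0..bb (beta q)}). fsc (\<Prod>q\<in>Q. c q (g q)) (mnm V (exq Q beta g))) y" .
qed

lemma poly_ext_sum:
  fixes p :: "real poly"
  assumes "degree p \<le> n"
  shows "poly p z = (\<Sum>m\<in>{0..n}. z ^ m * coeff p m)"
proof -
  have "poly p z = (\<Sum>m\<le>degree p. coeff p m * z ^ m)" by (rule poly_altdef)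
  also have "\<dots> = (\<Sum>m\<le>n. coeff p m * z ^ m)"
    by (rule sum.mono_neutral_left) (use assms in \<open>auto simp: coeff_eq_0\<close>)
  finally show ?thesis by (simp add: atLeast0AtMost mult.commute)
qed

lemma degree_linprod: "finite S \<Longrightarrow> degree (\<Prod>x\<in>S. [:- t x, 1:] :: real poly) \<le> card S"
  using degree_prod_sum_le[of S "\<lambda>x. [:- t x, 1:] :: real poly"] by simp

lemma poly_linprod: "poly (\<Prod>x\<in>S. [:- t x, 1:] :: real poly) z = (\<Prod>x\<in>S. z - t x)"
  by (simp add: poly_prod)




lemma prod_ne0: "(\<And>a. a \<in> A \<Longrightarrow> f a \<noteq> 0) \<Longrightarrow> prod f A \<noteq> (0::real)"
  by (cases "finite A") auto

lemma upper:
  fixes X :: "nat \<Rightarrow> 'a set" and A B :: "nat \<Rightarrow> 'a set"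
  assumes MT: "multi_two_families d a b X h A B"
  shows "h \<le> Qbound d a b"
proof -
  have disj: "\<And>j k. j\<in>{1..d} \<Longrightarrow> k\<in>{1..d} \<Longrightarrow> j \<noteq> k \<Longrightarrow> X j \<inter> X k = {}"
    and subA: "\<And>i. i\<in>{1..h} \<Longrightarrow> A i \<subseteq> (\<Union>j\<in>{1..d}. X j)"
    and subB: "\<And>i. i\<in>{1..h} \<Longrightarrow> B i \<subseteq> (\<Union>j\<in>{1..d}. X j)"
    and diag0: "\<And>i. i\<in>{1..h} \<Longrightarrow> A i \<inter> B i = {}"
    and cross: "\<And>i j. 1 \<le> i \<Longrightarrow> i < j \<Longrightarrow> j \<le> h \<Longrightarrow> A i \<inter> B j \<noteq> {}"
    and Bb: "\<And>i j. i\<in>{1..h} \<Longrightarrow> j\<in>{1..d} \<Longrightarrow> finite (B i \<inter> X j) \<and> card (B i \<inter> X j) \<le> b j"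
    and Aa: "\<And>i. i\<in>{1..h} \<Longrightarrow> \<exists>\<pi>. \<pi> permutes {1..d} \<and>
        (\<forall>j\<in>{1..d}. finite (A i \<inter> X j) \<and> card (A i \<inter> X j) \<le> a (\<pi> j))"
    using MT unfolding multi_two_families_def by blast+
  define part where "part x = (SOME j. j \<in> {1..d} \<and> x \<in> X j)" for x
  have part: "part x \<in> {1..d} \<and> x \<in> X (part x)" if "x \<in> (\<Union>j\<in>{1..d}. X j)" for x
    unfolding part_def by (rule someI_ex) (use that in auto)
  have part_uniq: "part x = j" if "j \<in> {1..d}" "x \<in> X j" for x j
    using part[of x] disj[of j "part x"] that by blast
  have finA: "finite (A i)" if "i \<in> {1..h}" for i
  proof -
    have "\<forall>j\<in>{1..d}. finite (A i \<inter> X j)" using Aa[OF that] by blast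
    moreover have "A i = (\<Union>j\<in>{1..d}. A i \<inter> X j)" using subA[OF that] by blast
    ultimately show ?thesis by (metis finite_UN finite_atLeastAtMost)
  qed
  have finB: "finite (B i)" if "i \<in> {1..h}" for i
  proof -
    have "\<forall>j\<in>{1..d}. finite (B i \<inter> X j)" using Bb[OF that] by blast
    moreover have "B i = (\<Union>j\<in>{1..d}. B i \<inter> X j)" using subB[OF that] by blast
    ultimately show ?thesis by (metis finite_UN finite_atLeastAtMost)
  qed
  define G where "G = (\<Union>i\<in>{1..h}. A i \<union> B i)"
  have "finite G" unfolding G_def using finA finB by auto
  then obtain f :: "'a \<Rightarrow> nat" and n where "inj_on f G"
    using finite_imp_inj_to_nat_seg by blast
  define t where "t x = real (f x) + 1" for x
  have t_pos: "t x > 0" for x unfolding t_def by simp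
  have t_inj: "x = y" if "x \<in> G" "y \<in> G" "t x = t y" for x y
    using that \<open>inj_on f G\<close> unfolding t_def by (auto dest: inj_onD)
  define am where "am = amax d a"
  have amax_ge: "a j \<le> am" if "j \<in> {1..d}" for j
    unfolding am_def amax_def using that by auto
  obtain pis where pis: "\<And>i. i\<in>{1..h} \<Longrightarrow> pis i permutes {1..d} \<and>
        (\<forall>j\<in>{1..d}. finite (A i \<inter> X j) \<and> card (A i \<inter> X j) \<le> a (pis i j))"
    using Aa by metis
  define Q where "Q i = Inl ` A i \<union> Inr ` (SIGMA j:{1..d}. {..< am - card (A i \<inter> X j)})" for i
  define beta where "beta q = (case q of Inl x \<Rightarrow> part x | Inr jn \<Rightarrow> fst jn)" for q :: "'a + nat \<times> nat"
  define cf where "cf q m = (case q of Inl x \<Rightarrow> t x ^ m | Inr _ \<Rightarrow> (if m = 0 then 1 else 0 :: real))"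
    for q :: "'a + nat \<times> nat" and m :: nat
  define ell where "ell q y = (\<Sum>m\<in>{0..b (beta q)}. cf q m * y (beta q, m))" for q y
  define FF where "FF i = (\<lambda>y. \<Prod>q\<in>Q i. ell q y)" for i
  define Pol where "Pol k j = (\<Prod>x\<in>B k \<inter> X j. [:- t x, 1:] :: real poly)" for k j
  define PP where "PP k = (\<lambda>(j,m). coeff (Pol k j) m)" for k
  have finQ: "finite (Q i)" if "i \<in> {1..h}" for i
    unfolding Q_def using finA[OF that] by auto
  have beta_in: "beta q \<in> {1..d}" if "i \<in> {1..h}" "q \<in> Q i" for i q
  proof -
    have "\<forall>x\<in>A i. part x \<in> {1..d}" using subA[OF that(1)] part by blast
    then show ?thesis using that(2) unfolding Q_def beta_def by auto
  qed
  have ell_Inl: "ell (Inl x) (PP k) = (\<Prod>x'\<in>B k \<inter> X (part x). t x - t x')"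
    if "k \<in> {1..h}" "part x \<in> {1..d}" for x k
  proof -
    have deg: "degree (Pol k (part x)) \<le> b (part x)"
      using degree_linprod[of "B k \<inter> X (part x)" t] Bb[OF that] unfolding Pol_def by auto
    have "ell (Inl x) (PP k) = (\<Sum>m\<in>{0..b (part x)}. t x ^ m * coeff (Pol k (part x)) m)"
      unfolding ell_def cf_def beta_def PP_def by simp
    also have "\<dots> = poly (Pol k (part x)) (t x)" using poly_ext_sum[OF deg] by simp
    finally show ?thesis unfolding Pol_def by (simp add: poly_linprod)
  qed
  have ell_Inr: "ell (Inr jn) (PP k) = (\<Prod>x'\<in>B k \<inter> X (fst jn). 0 - t x')" for jn k
  proof -
    have "ell (Inr jn) (PP k) = (\<Sum>m\<in>{0..b (fst jn)}. (if m = 0 then 1 else 0) * coeff (Pol k (fst jn)) m)"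
      unfolding ell_def cf_def beta_def PP_def by simp
    also have "\<dots> = coeff (Pol k (fst jn)) 0"
      by (simp add: sum.atLeast_Suc_atMost)
    also have "\<dots> = poly (Pol k (fst jn)) 0" by (simp add: poly_0_coeff_0)
    finally show ?thesis unfolding Pol_def by (simp add: poly_linprod)
  qed
  have diag: "FF i (PP i) \<noteq> 0" if i: "i \<in> {1..h}" for i
  proof -
    have "ell q (PP i) \<noteq> 0" if q: "q \<in> Q i" for q
    proof (cases q)
      case (Inl x)
      then have x: "x \<in> A i" using q unfolding Q_def by auto
      then have px: "part x \<in> {1..d}" using part subA[OF i] by blast
      have "(\<Prod>x'\<in>B i \<inter> X (part x). t x - t x') \<noteq> 0"
      proof (rule prod_ne0)
        fix x' assume x'0: "x' \<in> B i \<inter> X (part x)"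
        show "t x - t x' \<noteq> 0"
        proof
        assume "t x - t x' = 0"
        then have x': "x' \<in> B i" "t x = t x'" using x'0 by auto
        moreover have "x \<in> G" "x' \<in> G" using x x'(1) i unfolding G_def by auto
        ultimately have "x = x'" using t_inj[of x x'] by auto
        then show False using x x' diag0[OF i] by auto
        qed
      qed
      then show ?thesis using ell_Inl[OF i px] Inl by simp
    next
      case (Inr jn)
      have "(\<Prod>x'\<in>B i \<inter> X (fst jn). 0 - t x') \<noteq> 0"
        by (rule prod_ne0) (use t_pos in \<open>simp add: less_imp_neq[symmetric]\<close>)
      then show ?thesis using ell_Inr Inr by simp
    qed
    then show ?thesis unfolding FF_def by (rule prod_ne0)
  qed
  have tri: "FF i (PP k) = 0" if "1 \<le> i" "i < k" "k \<le> h" for i k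
  proof -
    obtain x where x: "x \<in> A i" "x \<in> B k" using cross[of i k] \<open>1 \<le> i\<close> \<open>i < k\<close> \<open>k \<le> h\<close> by blast
    have i: "i \<in> {1..h}" and k: "k \<in> {1..h}" using that by auto
    have px: "part x \<in> {1..d}" "x \<in> X (part x)" using part subA[OF i] x by blast+
    have "(\<Prod>x'\<in>B k \<inter> X (part x). t x - t x') = 0"
      by (rule prod_zero) (use finB[OF k] x px in auto)
    then have "ell (Inl x) (PP k) = 0"
      using ell_Inl[OF k px(1)] by simp
    moreover have "Inl x \<in> Q i" using x unfolding Q_def by auto
    ultimately show ?thesis unfolding FF_def by (intro prod_zero finQ[OF i]) blast
  qed
  have Vs_eq: "Vs d b = Sigma {1..d} (\<lambda>j. {0..b j})" unfolding Vs_def by auto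
  have finV: "finite (Vs d b)" unfolding Vs_eq by auto
  have span: "FF i \<in> FV.span (mnm (Vs d b) ` EXP d a b)" if i: "i \<in> {1..h}" for i
  proof -
    have inV: "(beta q, m) \<in> Vs d b" if "q \<in> Q i" "m \<le> b (beta q)" for q m
      using beta_in[OF i that(1)] that(2) unfolding Vs_def by auto
    have "FF i = (\<Sum>g\<in>PiE (Q i) (\<lambda>q. {0..b (beta q)}). fsc (\<Prod>q\<in>Q i. cf q (g q)) (mnm (Vs d b) (exq (Q i) beta g)))"
      unfolding FF_def ell_def by (rule expand[OF finQ[OF i] finV inV])
    also have "\<dots> \<in> FV.span (mnm (Vs d b) ` EXP d a b)"
    proof (rule FV.span_sum)
      fix g assume g: "g \<in> PiE (Q i) (\<lambda>q. {0..b (beta q)})"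
      show "fsc (\<Prod>q\<in>Q i. cf q (g q)) (mnm (Vs d b) (exq (Q i) beta g)) \<in> FV.span (mnm (Vs d b) ` EXP d a b)"
      proof (cases "(\<Prod>q\<in>Q i. cf q (g q)) = 0")
        case True
        then show ?thesis using FV.span_zero by (simp add: fsc_def zero_fun_def)
      next
        case False
        then have cfnz: "cf q (g q) \<noteq> 0" if "q \<in> Q i" for q
          using that finQ[OF i] by (auto simp: prod_zero_iff)
        have gq: "g q \<le> b (beta q)" if "q \<in> Q i" for q using g that by auto
        let ?e = "exq (Q i) beta g"
        have "?e \<in> EXP d a b"
        proof -
          have supp: "\<forall>v. v \<notin> Vs d b \<longrightarrow> ?e v = 0"
          proof (intro allI impI)
            fix v assume "v \<notin> Vs d b"
            then have "{q\<in>Q i. (beta q, g q) = v} = {}" using inV gq by auto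
            then show "?e v = 0" unfolding exq_def by (simp only: card.empty)
          qed
          have blk: "(\<Sum>m\<in>{0..b j}. ?e (j,m)) = am \<and> am \<le> a (pis i j) + ?e (j,0)"
            if j: "j \<in> {1..d}" for j
          proof -
            define r where "r = am - card (A i \<inter> X j)"
            have cA: "card (A i \<inter> X j) \<le> a (pis i j)" and fAj: "finite (A i \<inter> X j)"
              using pis[OF i] j by auto
            have "pis i j \<in> {1..d}" using permutes_in_image[of "pis i" "{1..d}" j] pis[OF i] j by auto
            then have "a (pis i j) \<le> am" by (rule amax_ge)
            then have cAm: "card (A i \<inter> X j) + r = am" unfolding r_def
              using cA by linarith
            define Qj where "Qj = {q\<in>Q i. beta q = j}"
            have Qj_eq: "Qj = Inl ` (A i \<inter> X j) \<union> Inr ` ({j} \<times> {..<r})"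
            proof
              show "Qj \<subseteq> Inl ` (A i \<inter> X j) \<union> Inr ` ({j} \<times> {..<r})"
              proof
                fix q assume q: "q \<in> Qj"
                show "q \<in> Inl ` (A i \<inter> X j) \<union> Inr ` ({j} \<times> {..<r})"
                proof (cases q)
                  case (Inl x)
                  then have "x \<in> A i" "part x = j" using q unfolding Qj_def Q_def beta_def by auto
                  then have "x \<in> X j" using part subA[OF i] by blast
                  then show ?thesis using Inl \<open>x \<in> A i\<close> by auto
                next
                  case (Inr jn)
                  then show ?thesis using q unfolding Qj_def Q_def beta_def r_def by auto
                qed
              qed
            next
              show "Inl ` (A i \<inter> X j) \<union> Inr ` ({j} \<times> {..<r}) \<subseteq> Qj"
                using part_uniq j unfolding Qj_def Q_def beta_def r_def by auto
            qed
            have cQj: "card Qj = am"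
            proof -
              have "card Qj = card (Inl ` (A i \<inter> X j) :: ('a + nat \<times> nat) set) + card (Inr ` ({j} \<times> {..<r}) :: ('a + nat \<times> nat) set)"
                unfolding Qj_eq by (rule card_Un_disjoint) (use fAj in auto)
              also have "\<dots> = card (A i \<inter> X j) + r"
                by (simp add: card_image card_cartesian_product)
              finally show ?thesis using cAm by simp
            qed
            have fQj: "finite Qj" unfolding Qj_def using finQ[OF i] by auto
            have eQ: "?e (j,m) = card {q\<in>Qj. g q = m}" for m
              unfolding exq_def Qj_def by (rule arg_cong[where f=card]) auto
            have "(\<Sum>m\<in>{0..b j}. ?e (j,m)) = (\<Sum>m\<in>{0..b j}. \<Sum>q\<in>{q. q\<in>Qj \<and> g q = m}. 1)"
              unfolding eQ by simp
            also have "\<dots> = (\<Sum>q\<in>Qj. 1)"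
              by (rule sum.group) (use fQj gq in \<open>auto simp: Qj_def\<close>)
            also have "\<dots> = am" using cQj by simp
            finally have s1: "(\<Sum>m\<in>{0..b j}. ?e (j,m)) = am" .
            have "Inr ` ({j} \<times> {..<r}) \<subseteq> {q\<in>Qj. g q = 0}"
            proof
              fix q assume q: "q \<in> (Inr ` ({j} \<times> {..<r}) :: ('a + nat \<times> nat) set)"
              then have "q \<in> Q i" using Qj_eq unfolding Qj_def by blast
              then have "cf q (g q) \<noteq> 0" by (rule cfnz)
              then have "g q = 0" using q unfolding cf_def by (auto split: if_splits)
              then show "q \<in> {q\<in>Qj. g q = 0}" using q Qj_eq by blast
            qed
            then have "card (Inr ` ({j} \<times> {..<r}) :: ('a + nat \<times> nat) set) \<le> card {q\<in>Qj. g q = 0}"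
              by (rule card_mono[rotated]) (use fQj in auto)
            then have "r \<le> ?e (j,0)" unfolding eQ by (simp add: card_image card_cartesian_product)
            then show ?thesis using s1 cAm cA by simp
          qed
          show ?thesis unfolding EXP_def am_def[symmetric] using supp blk pis[OF i] by blast
        qed
        then show ?thesis by (intro FV.span_scale FV.span_base) auto
      qed
    qed
    finally show ?thesis .
  qed
  have fE: "finite (EXP d a b)" and cE: "card (EXP d a b) \<le> Qbound d a b" using EXP_bound by auto
  have "h \<le> card (mnm (Vs d b) ` EXP d a b)"
    by (rule triangular_bound[where F = FF and P = PP]) (use diag tri span fE in auto)
  also have "\<dots> \<le> card (EXP d a b)" by (rule card_image_le[OF fE])
  finally show ?thesis using cE by simp
qed




lemma blocksum:
  fixes S T :: "nat set"
  assumes fS: "finite S" and fT: "finite T" and cST: "card S = card T"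
    and Sle: "\<And>x. x \<in> S \<Longrightarrow> x \<le> N" and Tgt: "\<And>x. x \<in> T \<Longrightarrow> x \<notin> S \<Longrightarrow> x > N"
  shows "\<Sum>S \<le> \<Sum>T \<and> (S \<noteq> T \<longrightarrow> \<Sum>S < \<Sum>T)"
proof -
  have cI: "card S = card (S \<inter> T) + card (S - T)" "card T = card (S \<inter> T) + card (T - S)"
    using fS fT by (metis Int_commute card_Int_Diff)+
  define m where "m = card (S - T)"
  have cm: "card (T - S) = m" using cI cST unfolding m_def by simp
  have s1: "\<Sum>S = \<Sum>(S \<inter> T) + \<Sum>(S - T)" using fS by (metis sum.Int_Diff)
  have s2: "\<Sum>T = \<Sum>(S \<inter> T) + \<Sum>(T - S)" using fT by (metis Int_commute sum.Int_Diff)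
  have b1: "\<Sum>(S - T) \<le> m * N"
    using sum_bounded_above[of "S - T" "\<lambda>x. x" N] Sle unfolding m_def by auto
  have b2: "m * Suc N \<le> \<Sum>(T - S)"
    using sum_bounded_below[of "T - S" "Suc N" "\<lambda>x. x"] Tgt cm by (auto simp: Suc_le_eq)
  have "\<Sum>(S - T) \<le> \<Sum>(T - S)" using b1 b2 by (meson le_trans mult_le_mono2 le_SucI order_refl)
  moreover have "S \<noteq> T \<longrightarrow> \<Sum>(S - T) < \<Sum>(T - S)"
  proof
    assume ne: "S \<noteq> T"
    have "m > 0"
    proof (rule ccontr)
      assume "\<not> m > 0"
      then have "card (S - T) = 0" "card (T - S) = 0" using cm unfolding m_def by auto
      then have "S - T = {}" "T - S = {}" using fS fT by auto
      then show False using ne by blast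
    qed
    then have "m * N < m * Suc N" by simp
    then show "\<Sum>(S - T) < \<Sum>(T - S)" using b1 b2 by linarith
  qed
  ultimately show ?thesis using s1 s2 by auto
qed

lemma lower:
  fixes d :: nat and a b :: "nat \<Rightarrow> nat"
  shows "\<exists>(X :: nat \<Rightarrow> (nat \<times> nat) set) A B. multi_two_families d a b X (Qbound d a b) A B"
proof -
  define QS where "QS = {S. S \<subseteq> Ucal d a b \<and>
     (\<exists>\<pi>. \<pi> permutes {1..d} \<and>
        (\<forall>i\<in>{1..d}. {k. (i, k) \<in> S} \<subseteq> {1..a (\<pi> i) + b i} \<and>
                     card {k. (i, k) \<in> S} = b i))}"
  have finU: "finite (Ucal d a b)"
  proof -
    have "Ucal d a b = (SIGMA i:{1..d}. {1..amax d a + b i})" unfolding Ucal_def by auto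
    then show ?thesis by auto
  qed
  have finQS: "finite QS" unfolding QS_def by (rule rev_finite_subset[of "Pow (Ucal d a b)"]) (use finU in auto)
  define Qb where "Qb = Qbound d a b"
  have Qb: "Qb = card QS" unfolding Qb_def Qbound_def QS_def ..
  define Phi where "Phi S = (\<Sum>j\<in>{1..d}. \<Sum>{k. (j,k) \<in> S})" for S :: "(nat \<times> nat) set"
  obtain xs where xs: "distinct xs" "set xs = QS" using finite_distinct_list[OF finQS] by blast
  define ys where "ys = sort_key Phi xs"
  have ys: "distinct ys" "set ys = QS" "sorted (map Phi ys)" "length ys = Qb"
    using xs unfolding ys_def Qb by (auto simp: distinct_card[symmetric])
  define g where "g i = ys ! (Qb - i)" for i
  have gQS: "g i \<in> QS" if "i \<in> {1..Qb}" for i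
    unfolding g_def using that ys nth_mem[of "Qb - i" ys] by auto
  have g_ord: "Phi (g k) \<le> Phi (g i)" if "1 \<le> i" "i < k" "k \<le> Qb" for i k
  proof -
    have "(map Phi ys) ! (Qb - k) \<le> (map Phi ys) ! (Qb - i)"
      using ys(3) that ys(4) by (intro sorted_nth_mono) auto
    then show ?thesis unfolding g_def using that ys(4) by simp
  qed
  have g_inj: "g i \<noteq> g k" if "1 \<le> i" "i < k" "k \<le> Qb" for i k
    unfolding g_def using that ys(1,4) by (simp add: nth_eq_iff_index_eq)
  define pi where "pi S = (SOME \<pi>. \<pi> permutes {1..d} \<and>
        (\<forall>i\<in>{1..d}. {k. (i, k) \<in> S} \<subseteq> {1..a (\<pi> i) + b i} \<and> card {k. (i, k) \<in> S} = b i))" for S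
  have pi: "pi S permutes {1..d} \<and>
        (\<forall>i\<in>{1..d}. {k. (i, k) \<in> S} \<subseteq> {1..a (pi S i) + b i} \<and> card {k. (i, k) \<in> S} = b i)"
    if "S \<in> QS" for S
  proof -
    from that have "\<exists>\<pi>. \<pi> permutes {1..d} \<and>
        (\<forall>i\<in>{1..d}. {k. (i, k) \<in> S} \<subseteq> {1..a (\<pi> i) + b i} \<and> card {k. (i, k) \<in> S} = b i)"
      unfolding QS_def by blast
    then show ?thesis unfolding pi_def by (rule someI_ex)
  qed
  have QSU: "S \<subseteq> Ucal d a b" if "S \<in> QS" for S using that unfolding QS_def by auto
  define AA where "AA S = {(j,k). j \<in> {1..d} \<and> k \<in> {1..a (pi S j) + b j} \<and> (j,k) \<notin> S}" for S
  define X where "X j = {p :: nat \<times> nat. fst p = j}" for j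
  define A where "A i = AA (g i)" for i
  define B where "B i = g i" for i
  have slice: "{k. (j,k) \<in> S} \<subseteq> {1..amax d a + b j}" if "S \<in> QS" for S j
    using QSU[OF that] unfolding Ucal_def by auto
  have finslice: "finite {k. (j,k) \<in> S}" if "S \<in> QS" for S j
    using slice[OF that] by (rule finite_subset) auto
  have key: "Phi S < Phi T" if S: "S \<in> QS" and T: "T \<in> QS" and ne: "S \<noteq> T"
    and dis: "AA S \<inter> T = {}" for S T
  proof -
    have blk: "\<Sum>{k. (j,k) \<in> S} \<le> \<Sum>{k. (j,k) \<in> T} \<and>
       ({k. (j,k) \<in> S} \<noteq> {k. (j,k) \<in> T} \<longrightarrow> \<Sum>{k. (j,k) \<in> S} < \<Sum>{k. (j,k) \<in> T})"
      if j: "j \<in> {1..d}" for j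
    proof (rule blocksum[where N = "a (pi S j) + b j"])
      show "finite {k. (j,k) \<in> S}" "finite {k. (j,k) \<in> T}" using finslice S T by auto
      show "card {k. (j,k) \<in> S} = card {k. (j,k) \<in> T}" using pi[OF S] pi[OF T] j by auto
      show "x \<le> a (pi S j) + b j" if "x \<in> {k. (j,k) \<in> S}" for x
      proof -
        have "{k. (j,k) \<in> S} \<subseteq> {1..a (pi S j) + b j}" using pi[OF S] j by blast
        then show ?thesis using that by auto
      qed
      show "x > a (pi S j) + b j" if "x \<in> {k. (j,k) \<in> T}" "x \<notin> {k. (j,k) \<in> S}" for x
      proof -
        have "x \<ge> 1" using slice[OF T, of j] that(1) by auto
        moreover have "(j,x) \<notin> AA S" using dis that(1) by auto
        ultimately show ?thesis using that j unfolding AA_def by auto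
      qed
    qed
    have ex: "\<exists>j\<in>{1..d}. {k. (j,k) \<in> S} \<noteq> {k. (j,k) \<in> T}"
    proof (rule ccontr)
      assume "\<not> ?thesis"
      then have "S = T" using QSU[OF S] QSU[OF T] unfolding Ucal_def by fast
      then show False using ne by simp
    qed
    show ?thesis unfolding Phi_def
    proof (rule sum_strict_mono_ex1)
      show "finite {1..d}" by simp
      show "\<forall>x\<in>{1..d}. \<Sum>{k. (x,k) \<in> S} \<le> \<Sum>{k. (x,k) \<in> T}" using blk by blast
      show "\<exists>x\<in>{1..d}. \<Sum>{k. (x,k) \<in> S} < \<Sum>{k. (x,k) \<in> T}" using blk ex by blast
    qed
  qed
  have "multi_two_families d a b X Qb A B"
    unfolding multi_two_families_def
  proof (intro conjI ballI allI impI)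
    show "X j \<inter> X k = {}" if "j \<noteq> k" for j k using that unfolding X_def by auto
    show "A i \<subseteq> (\<Union>j\<in>{1..d}. X j)" for i unfolding A_def AA_def X_def by auto
    show "B i \<subseteq> (\<Union>j\<in>{1..d}. X j)" if "i \<in> {1..Qb}" for i
      using QSU[OF gQS[OF that]] unfolding B_def X_def Ucal_def by auto
    show "A i \<inter> B i = {}" for i unfolding A_def B_def AA_def by auto
    show "A i \<inter> B k \<noteq> {}" if "1 \<le> i \<and> i < k \<and> k \<le> Qb" for i k
    proof
      assume "A i \<inter> B k = {}"
      then have "Phi (g i) < Phi (g k)"
        using that gQS[of i] gQS[of k] g_inj[of i k] unfolding A_def B_def by (intro key) auto
      then show False using g_ord[of i k] that by auto
    qed
    fix i j assume i: "i \<in> {1..Qb}" and j: "j \<in> {1..d}"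
    have BX: "B i \<inter> X j = Pair j ` {k. (j,k) \<in> g i}" unfolding B_def X_def by auto
    show "finite (B i \<inter> X j)"
      unfolding BX using finslice[OF gQS[OF i]] by simp
    show "card (B i \<inter> X j) \<le> b j"
      unfolding BX using pi[OF gQS[OF i]] j
      by (simp add: card_image inj_on_def)
  next
    fix i assume i: "i \<in> {1..Qb}"
    let ?S = "g i"
    have S: "?S \<in> QS" using gQS[OF i] .
    show "\<exists>\<pi>. \<pi> permutes {1..d} \<and> (\<forall>j\<in>{1..d}. finite (A i \<inter> X j) \<and> card (A i \<inter> X j) \<le> a (\<pi> j))"
    proof (intro exI conjI ballI)
      show "pi ?S permutes {1..d}" using pi[OF S] by simp
      fix j assume j: "j \<in> {1..d}"
      have AX: "A i \<inter> X j = Pair j ` ({1..a (pi ?S j) + b j} - {k. (j,k) \<in> ?S})"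
        unfolding A_def AA_def X_def using j by auto
      have sub: "{k. (j,k) \<in> ?S} \<subseteq> {1..a (pi ?S j) + b j}" and cs: "card {k. (j,k) \<in> ?S} = b j"
        using pi[OF S] j by auto
      have "card ({1..a (pi ?S j) + b j} - {k. (j,k) \<in> ?S}) = a (pi ?S j)"
        using card_Diff_subset[OF finslice[OF S] sub] cs by simp
      then show "finite (A i \<inter> X j)" "card (A i \<inter> X j) \<le> a (pi ?S j)"
        unfolding AX by (auto simp: card_image inj_on_def)
    qed
  qed
  then show ?thesis unfolding Qb_def by blast
qed


theorem theorem1:
  fixes d :: nat and a b :: "nat \<Rightarrow> nat"
  shows "(\<forall>(X :: nat \<Rightarrow> 'a set) h A B. multi_two_families d a b X h A B \<longrightarrow> h \<le> Qbound d a b)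
     \<and> (\<exists>(X :: nat \<Rightarrow> (nat \<times> nat) set) A B. multi_two_families d a b X (Qbound d a b) A B)"
  using upper lower by blast

end
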